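(* Let $A\in M_n(\mathbb{Z})$ be invertible such that $x\mapsto A^{-1}x$ is a similarity with respect to Euclidean distance, and let $D\subset\mathbb{Z}^n$ be a subset of a complete residue system mod $A$. Suppose every element of $T_{A,D-D}$ has a unique $(A,D-D)$-representation. Then for every $\lambda\in[0,\dim_B T_{A,D}]$, the level set $\Phi_{A,D}^{-1}(\lambda)$ is dense in $F_{A,D}$.
   Context: A similarity means a map $f$ with $\|f(x)-f(y)\|=c\|x-y\|$ for some $c\in(0,1)$ and all $x,y$. For finite $E\subset\mathbb{R}^n$, $\pi_{A,E}((e_j)_{j\ge1})=\sum_{j\ge1}A^{-j}e_j$ for $(e_j)\in E^{\mathbb{N}}$, $T_{A,E}=\pi_{A,E}(E^{\mathbb{N}})$, and an $(A,E)$-representation of $x$ is a sequence $(e_j)\in E^{\mathbb{N}}$ with $\pi_{A,E}((e_j))=x$. $D-D=\{a-b:a,b\in D\}$. A complete residue system mod $A$ is a set $\mathcal{D}\subset\mathbb{Z}^n$ mapping bijectively onto $\mathbb{Z}^n/A\mathbb{Z}^n$. $F_{A,D}=\{\alpha\in\mathbb{R}^n: T_{A,D}\cap(T_{A,D}+\alpha)\ne\emptyset\}$ $(=T_{A,D-D})$. $\Phi_{A,D}$ is the function defined on $\{\alpha\in F_{A,D}:\dim_B(T_{A,D}\cap(T_{A,D}+\alpha)) \text{ exists}\}$ by $\Phi_{A,D}(\alpha)=\dim_B(T_{A,D}\cap(T_{A,D}+\alpha))$, where $\dim_B$ is the box-counting dimension. *)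

theory Defs
  imports "HOL-Analysis.Analysis"
begin

definition int_vecs :: "(real^'n) set" where
  "int_vecs = {x. \<forall>i. x $ i \<in> \<int>}"

definition int_matrix :: "real^'n^'n \<Rightarrow> bool" where
  "int_matrix A \<longleftrightarrow> (\<forall>i j. A $ i $ j \<in> \<int>)"

definition is_similarity :: "(real^'n \<Rightarrow> real^'n) \<Rightarrow> bool" where
  "is_similarity f \<longleftrightarrow> (\<exists>c. 0 < c \<and> c < 1 \<and> (\<forall>x y. norm (f x - f y) = c * norm (x - y)))"

text \<open>Complete residue system mod A: subset of Z^n mapping bijectively onto Z^n / A Z^n.\<close>
definition complete_residue_system :: "real^'n^'n \<Rightarrow> (real^'n) set \<Rightarrow> bool" where
  "complete_residue_system A R \<longleftrightarrow> R \<subseteq> int_vecs \<and>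
     (\<forall>z\<in>int_vecs. \<exists>!d. d \<in> R \<and> z - d \<in> (\<lambda>v. A *v v) ` int_vecs)"

definition diffset :: "'a::ab_group_add set \<Rightarrow> 'a set" where
  "diffset D = {a - b | a b. a \<in> D \<and> b \<in> D}"

text \<open>pi_{A,E}(e) = sum_{j>=1} A^{-j} e_j (sequence indexed from 0, e 0 = e_1).\<close>
definition digit_map :: "real^'n^'n \<Rightarrow> (nat \<Rightarrow> real^'n) \<Rightarrow> real^'n" where
  "digit_map A e = (\<Sum>j. (((*v) (matrix_inv A)) ^^ (Suc j)) (e j))"

definition Tset :: "real^'n^'n \<Rightarrow> (real^'n) set \<Rightarrow> (real^'n) set" where
  "Tset A E = digit_map A ` {e. \<forall>j. e j \<in> E}"

definition is_rep :: "real^'n^'n \<Rightarrow> (real^'n) set \<Rightarrow> real^'n \<Rightarrow> (nat \<Rightarrow> real^'n) \<Rightarrow> bool" where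
  "is_rep A E x e \<longleftrightarrow> (\<forall>j. e j \<in> E) \<and> digit_map A e = x"

definition Fset :: "real^'n^'n \<Rightarrow> (real^'n) set \<Rightarrow> (real^'n) set" where
  "Fset A D = {\<alpha>. Tset A D \<inter> ((\<lambda>x. x + \<alpha>) ` Tset A D) \<noteq> {}}"

definition cover_number :: "real \<Rightarrow> 'a::metric_space set \<Rightarrow> nat" where
  "cover_number \<delta> F = (LEAST k. \<exists>C. finite C \<and> card C = k \<and> F \<subseteq> \<Union>C \<and> (\<forall>S\<in>C. diameter S \<le> \<delta>))"

definition box_dim_exists :: "'a::metric_space set \<Rightarrow> bool" where
  "box_dim_exists F \<longleftrightarrow> F \<noteq> {} \<and> bounded F \<and>
     (\<exists>d. ((\<lambda>\<delta>. ln (real (cover_number \<delta> F)) / (- ln \<delta>)) \<longlongrightarrow> d) (at_right 0))"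

definition box_dim :: "'a::metric_space set \<Rightarrow> real" where
  "box_dim F = Lim (at_right 0) (\<lambda>\<delta>. ln (real (cover_number \<delta> F)) / (- ln \<delta>))"

definition Phi_level :: "real^'n^'n \<Rightarrow> (real^'n) set \<Rightarrow> real \<Rightarrow> (real^'n) set" where
  "Phi_level A D lam = {\<alpha> \<in> Fset A D.
      box_dim_exists (Tset A D \<inter> ((\<lambda>x. x + \<alpha>) ` Tset A D)) \<and>
      box_dim (Tset A D \<inter> ((\<lambda>x. x + \<alpha>) ` Tset A D)) = lam}"

end

theory Submission
  imports Defs
begin


locale setting =
  fixes A :: "real^'n^'n" and c :: real and R :: "(real^'n) set"
  assumes intA: "int_matrix A" and invA: "invertible A"
    and c0: "0 < c" and c1: "c < 1"
    and bnorm: "\<And>x. norm (matrix_inv A *v x) = c * norm x"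
    and crs: "complete_residue_system A R"
begin

abbreviation "bp k \<equiv> ((*v) (matrix_inv A) ^^ k)"
abbreviation "ap k \<equiv> ((*v) A ^^ k)"

lemma inv_props: "A ** matrix_inv A = mat 1" "matrix_inv A ** A = mat 1"
  using invA unfolding invertible_def matrix_inv_def by (metis (mono_tags, lifting) someI_ex)+

lemma a_b[simp]: "A *v (matrix_inv A *v x) = x"
  by (simp add: inv_props matrix_vector_mul_assoc)
lemma b_a[simp]: "matrix_inv A *v (A *v x) = x"
  by (simp add: inv_props matrix_vector_mul_assoc)

lemma bp_linear: "linear (bp k)"
  by (induction k) (auto intro: linear_compose[unfolded o_def] matrix_vector_mul_linear simp: linear_id[unfolded id_def])

lemma ap_linear: "linear (ap k)"
  by (induction k) (auto intro: linear_compose[unfolded o_def] matrix_vector_mul_linear simp: linear_id[unfolded id_def])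

lemma bp_norm: "norm (bp k x) = c ^ k * norm x"
  by (induction k) (auto simp: bnorm)

lemma ap_bp: "ap k (bp k x) = x"
proof (induction k arbitrary: x)
  case (Suc k)
  have "ap (Suc k) (bp (Suc k) x) = A *v (ap k (bp k (matrix_inv A *v x)))"
    by (simp add: funpow_swap1) 
  then show ?case using Suc by simp
qed simp

lemma bp_ap: "bp k (ap k x) = x"
proof (induction k arbitrary: x)
  case (Suc k)
  have "bp (Suc k) (ap (Suc k) x) = matrix_inv A *v (bp k (ap k (A *v x)))"
    by (simp add: funpow_swap1) 
  then show ?case using Suc by simp
qed simp

lemma ap_norm: "norm (ap k x) = norm x / c ^ k"
  using bp_norm[of k "ap k x"] c0 by (simp add: bp_ap)

lemma int_vecs_A: "z \<in> int_vecs \<Longrightarrow> A *v z \<in> int_vecs"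
  using intA unfolding int_vecs_def int_matrix_def matrix_vector_mult_def
  by (auto intro!: Ints_mult)

lemma int_vecs_add: "z \<in> int_vecs \<Longrightarrow> w \<in> int_vecs \<Longrightarrow> z + w \<in> int_vecs"
  and int_vecs_diff: "z \<in> int_vecs \<Longrightarrow> w \<in> int_vecs \<Longrightarrow> z - w \<in> int_vecs"
  and int_vecs_0: "0 \<in> int_vecs"
  unfolding int_vecs_def by auto


lemma R_int: "R \<subseteq> int_vecs" using crs unfolding complete_residue_system_def by auto

lemma R_unique: "d \<in> R \<Longrightarrow> d' \<in> R \<Longrightarrow> z \<in> int_vecs \<Longrightarrow> d - d' = A *v z \<Longrightarrow> d = d'"
proof -
  assume h: "d \<in> R" "d' \<in> R" "z \<in> int_vecs" "d - d' = A *v z"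
  have "d \<in> int_vecs" using h R_int by auto
  then have "\<exists>!e. e \<in> R \<and> d - e \<in> (\<lambda>v. A *v v) ` int_vecs"
    using crs unfolding complete_residue_system_def by auto
  moreover have "d - d \<in> (\<lambda>v. A *v v) ` int_vecs"
    using int_vecs_0 by (auto intro!: image_eqI[where x=0])
  moreover have "d - d' \<in> (\<lambda>v. A *v v) ` int_vecs" using h by auto
  ultimately show "d = d'" using h by blast
qed

end

lemma finite_lattice_ball: "finite (int_vecs \<inter> cball (0::real^'n) r)"
proof -
  let ?m = "\<lceil>r\<rceil>"
  have "int_vecs \<inter> cball (0::real^'n) r \<subseteq> (\<lambda>f. \<chi> i. of_int (f i)) ` (PiE UNIV (\<lambda>_. {-?m..?m}))"
  proof
    fix x :: "real^'n" assume x: "x \<in> int_vecs \<inter> cball 0 r"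
    define f where "f = (\<lambda>i. \<lfloor>x$i\<rfloor>)"
    have xi: "x$i = of_int (f i)" for i using x unfolding int_vecs_def f_def by auto
    have "\<bar>x$i\<bar> \<le> r" for i using x component_le_norm_cart[of x i] by auto
    have "f i \<in> {-?m..?m}" for i
    proof -
      have a: "-r \<le> x$i" "x$i \<le> r" using \<open>\<bar>x$i\<bar> \<le> r\<close> by auto
      have b: "r \<le> of_int ?m" by (rule le_of_int_ceiling)
      have "of_int (-?m) \<le> x$i" using a b by (simp only: of_int_minus)
      then have "-?m \<le> f i" unfolding f_def by (simp only: le_floor_iff)
      moreover have "f i \<le> ?m" unfolding f_def using a b by (simp add: floor_le_iff) linarith
      ultimately show ?thesis by simp
    qed
    then have "f \<in> PiE UNIV (\<lambda>_. {-?m..?m})" by auto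
    moreover have "x = (\<chi> i. of_int (f i))" using xi by (simp add: vec_eq_iff)
    ultimately show "x \<in> (\<lambda>f. \<chi> i. of_int (f i)) ` (PiE UNIV (\<lambda>_. {-?m..?m}))" by blast
  qed
  then show ?thesis by (rule finite_subset) (intro finite_imageI finite_PiE; auto)
qed

context setting begin

lemma R_finite: "finite R"
proof -
  define fl where "fl = (\<lambda>y::real^'n. (\<chi> i. of_int \<lfloor>y$i\<rfloor>) :: real^'n)"
  define rep where "rep = (\<lambda>d. d - A *v fl (matrix_inv A *v d))"
  have flint: "fl y \<in> int_vecs" for y unfolding fl_def int_vecs_def by auto
  have fln: "norm (y - fl y) \<le> real CARD('n)" for y
  proof -
    have "norm (y - fl y) \<le> (\<Sum>i\<in>UNIV. \<bar>(y - fl y)$i\<bar>)" by (rule norm_le_l1_cart)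
    also have "\<dots> \<le> (\<Sum>i\<in>(UNIV::'n set). 1)"
      by (intro sum_mono) (auto simp: fl_def, linarith)
    finally show ?thesis by simp
  qed
  have "inj_on rep R"
  proof (rule inj_onI)
    fix d d' assume h: "d \<in> R" "d' \<in> R" "rep d = rep d'"
    then have "d - d' = A *v (fl (matrix_inv A *v d) - fl (matrix_inv A *v d'))"
      unfolding rep_def by (simp add: matrix_vector_mult_diff_distrib algebra_simps)
    then show "d = d'" using R_unique[OF h(1,2)] int_vecs_diff flint by blast
  qed
  moreover have "rep ` R \<subseteq> int_vecs \<inter> cball 0 (real CARD('n) / c)"
  proof
    fix x assume "x \<in> rep ` R"
    then obtain d where d: "d \<in> R" "x = rep d" by auto
    have "x = A *v (matrix_inv A *v d - fl (matrix_inv A *v d))"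
      using d unfolding rep_def by (simp add: matrix_vector_mult_diff_distrib)
    then have "norm x = norm (matrix_inv A *v d - fl (matrix_inv A *v d)) / c"
      using ap_norm[of 1] by simp
    also have "\<dots> \<le> real CARD('n) / c" using fln c0 by (simp add: divide_right_mono)
    finally have "norm x \<le> real CARD('n) / c" .
    moreover have "x \<in> int_vecs" using d R_int flint unfolding rep_def
      by (auto intro!: int_vecs_diff int_vecs_A)
    ultimately show "x \<in> int_vecs \<inter> cball 0 (real CARD('n) / c)" by auto
  qed
  ultimately show ?thesis using finite_lattice_ball
    by (metis finite_imageD finite_subset)
qed

end

context setting begin

lemma bp_bl: "bounded_linear (bp k)"
  using bp_linear linear_conv_bounded_linear by blast

lemma bp_diff: "bp k (x - y) = bp k x - bp k y"
  using bp_linear linear_diff by blast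
lemma bp_add: "bp k (x + y) = bp k x + bp k y"
  using bp_linear linear_add by blast
lemma bp_0: "bp k 0 = 0"
  using bp_linear linear_0 by blast
lemma ap_diff: "ap k (x - y) = ap k x - ap k y"
  using ap_linear linear_diff by blast
lemma ap_add: "ap k (x + y) = ap k x + ap k y"
  using ap_linear linear_add by blast
lemma ap_sum: "ap k (sum f S) = sum (\<lambda>i. ap k (f i)) S"
  using ap_linear linear_sum by blast

lemma dm_term_bound:
  assumes "\<forall>j. norm (e j) \<le> M"
  shows "norm (bp (Suc j) (e j)) \<le> M * c ^ Suc j"
  using assms c0 by (simp only: bp_norm) (simp add: mult.commute mult_left_mono)

lemma geo_summable: "summable (\<lambda>j. M * c ^ Suc j)"
  using c0 c1 by (intro summable_mult) (simp add: summable_geometric)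

lemma dm_summable:
  assumes "\<forall>j. norm (e j) \<le> M"
  shows "summable (\<lambda>j. bp (Suc j) (e j))"
  by (rule summable_comparison_test'[OF geo_summable]) (use dm_term_bound[OF assms] in auto)

lemma dm_norm:
  assumes "\<forall>j. norm (e j) \<le> M"
  shows "norm (digit_map A e) \<le> M / (1 - c)"
proof -
  have M0: "0 \<le> M" using assms norm_ge_zero order_trans by blast
  have s: "summable (\<lambda>j. norm (bp (Suc j) (e j)))"
    by (rule summable_comparison_test'[OF geo_summable]) (use dm_term_bound[OF assms] in auto)
  have "norm (digit_map A e) \<le> (\<Sum>j. norm (bp (Suc j) (e j)))"
    unfolding digit_map_def by (rule summable_norm[OF s])
  also have "\<dots> \<le> (\<Sum>j. M * c ^ Suc j)"
    by (rule suminf_le[OF _ s geo_summable]) (use dm_term_bound[OF assms] in auto)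
  also have "\<dots> = M * c * (\<Sum>j. c ^ j)"
    using c0 c1 by (subst suminf_mult[symmetric]) (auto simp: summable_geometric mult.assoc)
  also have "\<dots> = M * c / (1 - c)" using c0 c1 by (simp add: suminf_geometric)
  also have "\<dots> \<le> M / (1 - c)" using c0 c1 M0 by (simp add: divide_right_mono mult_left_le)
  finally show ?thesis .
qed

lemma dm_diff:
  assumes "\<forall>j. norm (e j) \<le> M" "\<forall>j. norm (e' j) \<le> M'"
  shows "digit_map A (\<lambda>j. e j - e' j) = digit_map A e - digit_map A e'"
  unfolding digit_map_def bp_diff
  by (rule suminf_diff[OF dm_summable[OF assms(1)] dm_summable[OF assms(2)], symmetric])

lemma dm_split:
  assumes "\<forall>j. norm (e j) \<le> M"
  shows "digit_map A e = (\<Sum>j<k. bp (Suc j) (e j)) + bp k (digit_map A (\<lambda>j. e (j + k)))"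
proof -
  have s2: "summable (\<lambda>j. bp (Suc j) (e (j + k)))"
    by (rule dm_summable[of _ M]) (use assms in auto)
  have "digit_map A e = (\<Sum>j. bp (Suc (j + k)) (e (j + k))) + (\<Sum>j<k. bp (Suc j) (e j))"
    unfolding digit_map_def by (rule suminf_split_initial_segment[OF dm_summable[OF assms]])
  also have "(\<lambda>j. bp (Suc (j + k)) (e (j + k))) = (\<lambda>j. bp k (bp (Suc j) (e (j + k))))"
  proof
    fix j
    have "Suc (j + k) = k + Suc j" by simp
    then show "bp (Suc (j + k)) (e (j + k)) = bp k (bp (Suc j) (e (j + k)))"
      by (simp only: funpow_add o_def)
  qed
  also have "(\<Sum>j. bp k (bp (Suc j) (e (j + k)))) = bp k (digit_map A (\<lambda>j. e (j + k)))"
    unfolding digit_map_def by (rule bounded_linear.suminf[OF bp_bl s2, symmetric])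
  finally show ?thesis by simp
qed

end


primrec zf :: "real^'n^'n \<Rightarrow> (nat \<Rightarrow> real^'n) \<Rightarrow> nat \<Rightarrow> real^'n" where
  "zf A e 0 = 0"
| "zf A e (Suc k) = A *v zf A e k + e k"

lemma cover_le:
  assumes "finite C" "F \<subseteq> \<Union>C" "\<forall>S\<in>C. diameter S \<le> \<delta>"
  shows "cover_number \<delta> F \<le> card C"
  unfolding cover_number_def by (rule Least_le) (use assms in blast)

lemma cover_obtain:
  assumes "finite C" "F \<subseteq> \<Union>C" "\<forall>S\<in>C. diameter S \<le> \<delta>"
  shows "\<exists>C'. finite C' \<and> card C' = cover_number \<delta> F \<and> F \<subseteq> \<Union>C' \<and> (\<forall>S\<in>C'. diameter S \<le> \<delta>)"
proof -
  have "\<exists>k C. finite C \<and> card C = k \<and> F \<subseteq> \<Union>C \<and> (\<forall>S\<in>C. diameter S \<le> \<delta>)" using assms by blast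
  then show ?thesis unfolding cover_number_def by (rule LeastI_ex)
qed

context setting begin

definition pp :: "(nat \<Rightarrow> real^'n) \<Rightarrow> nat \<Rightarrow> real^'n" where
  "pp e k = (\<Sum>j<k. bp (Suc j) (e j))"

lemma ap_pp: "ap k (pp e k) = zf A e k"
proof (induction k)
  case 0 then show ?case by (simp add: pp_def)
next
  case (Suc k)
  have "ap (Suc k) (pp e (Suc k)) = ap (Suc k) (pp e k) + ap (Suc k) (bp (Suc k) (e k))"
    unfolding pp_def by (simp only: sum.lessThan_Suc ap_add)
  also have "ap (Suc k) (pp e k) = A *v ap k (pp e k)" by simp
  also have "ap (Suc k) (bp (Suc k) (e k)) = e k" by (rule ap_bp)
  finally show ?case using Suc by simp
qed

lemma pp_cong: "(\<forall>j<k. e j = e' j) \<Longrightarrow> pp e k = pp e' k"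
  unfolding pp_def by (rule sum.cong) auto

lemma zf_cong: "(\<forall>j<k. e j = e' j) \<Longrightarrow> zf A e k = zf A e' k"
  by (induction k) auto

lemma zf_int: "(\<forall>j<k. e j \<in> int_vecs) \<Longrightarrow> zf A e k \<in> int_vecs"
  by (induction k) (auto intro!: int_vecs_add int_vecs_A simp: int_vecs_0)

lemma zf_inj: "(\<forall>j<k. e j \<in> R \<and> e' j \<in> R) \<Longrightarrow> zf A e k = zf A e' k \<Longrightarrow> \<forall>j<k. e j = e' j"
proof (induction k)
  case 0 then show ?case by simp
next
  case (Suc k)
  have i1: "zf A e k \<in> int_vecs" "zf A e' k \<in> int_vecs"
    using Suc.prems(1) R_int by (auto intro!: zf_int)
  have "e k - e' k = A *v (zf A e' k - zf A e k)"
    using Suc.prems(2) by (simp add: matrix_vector_mult_diff_distrib algebra_simps)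
  then have ek: "e k = e' k" using R_unique Suc.prems(1) i1 int_vecs_diff by blast
  then have "A *v zf A e k = A *v zf A e' k" using Suc.prems(2) by simp
  then have "zf A e k = zf A e' k" by (metis b_a)
  then have "\<forall>j<k. e j = e' j" using Suc by auto
  then show ?case using ek less_Suc_eq by auto
qed

end

locale moran_setting = setting +
  fixes D and M :: real
  assumes DR: "D \<subseteq> R" and DM: "\<forall>d\<in>D. norm d \<le> M" and M0: "0 \<le> M"
begin

definition rr where "rr = M / (1 - c)"

lemma rr0: "0 \<le> rr" unfolding rr_def using M0 c1 by auto

lemma D_finite: "finite D" using R_finite DR finite_subset by blast

definition moran where
  "moran E = digit_map A ` {e. \<forall>j. e j \<in> E j}"

lemma near_pp:
  assumes E: "\<forall>j. E j \<subseteq> D" and e: "\<forall>j. e j \<in> E j"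
  shows "norm (digit_map A e - pp e k) \<le> c ^ k * rr"
proof -
  have b: "\<forall>j. norm (e j) \<le> M" using E e DM by blast
  have "digit_map A e - pp e k = bp k (digit_map A (\<lambda>j. e (j + k)))"
    using dm_split[OF b, of k] by (simp add: pp_def)
  then have "norm (digit_map A e - pp e k) = c ^ k * norm (digit_map A (\<lambda>j. e (j + k)))"
    by (simp add: bp_norm)
  also have "\<dots> \<le> c ^ k * rr" unfolding rr_def
    by (rule mult_left_mono[OF dm_norm]) (use b c0 in auto)
  finally show ?thesis .
qed

lemma moran_bounded:
  assumes E: "\<forall>j. E j \<subseteq> D"
  shows "moran E \<subseteq> cball 0 rr"
proof
  fix x assume "x \<in> moran E"
  then obtain e where e: "\<forall>j. e j \<in> E j" "x = digit_map A e" unfolding moran_def by auto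
  have b: "\<forall>j. norm (e j) \<le> M" using E e DM by blast
  show "x \<in> cball 0 rr" using dm_norm[OF b] e unfolding rr_def by auto
qed

lemma cover_upper_ex:
  assumes E: "\<forall>j. E j \<subseteq> D" and d: "2 * c ^ k * rr \<le> \<delta>"
  shows "\<exists>C. finite C \<and> card C \<le> card (PiE {..<k} E) \<and> moran E \<subseteq> \<Union>C \<and> (\<forall>S\<in>C. diameter S \<le> \<delta>)"
proof -
  define piece where "piece = (\<lambda>w. digit_map A ` {e. (\<forall>j. e j \<in> E j) \<and> (\<forall>j<k. e j = w j)})"
  define C where "C = piece ` PiE {..<k} E"
  have fin: "finite (PiE {..<k} E)" using E D_finite by (auto intro!: finite_PiE intro: finite_subset)
  have "finite C" "card C \<le> card (PiE {..<k} E)" unfolding C_def using fin by (auto intro: card_image_le)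
  moreover have "moran E \<subseteq> \<Union>C"
  proof
    fix x assume "x \<in> moran E"
    then obtain e where e: "\<forall>j. e j \<in> E j" "x = digit_map A e" unfolding moran_def by auto
    have "restrict e {..<k} \<in> PiE {..<k} E" using e by auto
    moreover have "x \<in> piece (restrict e {..<k})" unfolding piece_def using e by auto
    ultimately show "x \<in> \<Union>C" unfolding C_def by blast
  qed
  moreover have "\<forall>S\<in>C. diameter S \<le> \<delta>"
  proof
    fix S assume "S \<in> C"
    then obtain w where w: "S = piece w" unfolding C_def by auto
    have "norm (x - pp w k) \<le> c ^ k * rr" if "x \<in> S" for x
    proof -
      obtain e where e: "\<forall>j. e j \<in> E j" "\<forall>j<k. e j = w j" "x = digit_map A e"
        using \<open>x \<in> S\<close> w unfolding piece_def by auto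
      show ?thesis using near_pp[OF E e(1), of k] pp_cong[OF e(2)] e(3) by simp
    qed
    note nb = this
    have "diameter S \<le> 2 * c ^ k * rr"
    proof (rule diameter_le)
      show "S \<noteq> {} \<or> 0 \<le> 2 * c ^ k * rr" using rr0 c0 by auto
      fix x y assume xy: "x \<in> S" "y \<in> S"
      have "norm (x - y) = norm ((x - pp w k) - (y - pp w k))" by simp
      also have "\<dots> \<le> norm (x - pp w k) + norm (y - pp w k)" by (rule norm_triangle_ineq4)
      also have "\<dots> \<le> 2 * c ^ k * rr" using nb[OF xy(1)] nb[OF xy(2)] by simp
      finally show "norm (x - y) \<le> 2 * c ^ k * rr" .
    qed
    then show "diameter S \<le> \<delta>" using d by simp
  qed
  ultimately show ?thesis by blast
qed

lemma cover_upper: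
  assumes E: "\<forall>j. E j \<subseteq> D" and d: "2 * c ^ k * rr \<le> \<delta>"
  shows "cover_number \<delta> (moran E) \<le> card (PiE {..<k} E)"
  using cover_upper_ex[OF assms] cover_le by (meson order_trans)

lemma level_exists:
  assumes "0 < \<delta>" shows "\<exists>j. 2 * c ^ j * rr \<le> \<delta>"
proof -
  have "0 < \<delta> / (2 * rr + 1)" using assms rr0 by auto
  then obtain j where j: "c ^ j < \<delta> / (2 * rr + 1)" using real_arch_pow_inv c1 by blast
  then have "c ^ j * (2 * rr + 1) < \<delta>" using rr0 by (simp add: pos_less_divide_eq)
  moreover have "2 * c ^ j * rr \<le> c ^ j * (2 * rr + 1)" using c0 by (simp add: algebra_simps)
  ultimately show ?thesis by (intro exI[of _ j]) linarith
qed

definition QQ where "QQ = card (int_vecs \<inter> cball (0::real^'a) (1 + 2 * rr))"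

lemma cover_lower:
  assumes E: "\<forall>j. E j \<subseteq> D" and En: "\<forall>j. E j \<noteq> {}" and d0: "0 < \<delta>" and dk: "\<delta> \<le> c ^ k"
    and bnd: "\<forall>S::(real^'a) set. diameter S \<le> \<delta> \<longrightarrow> bounded S"
  shows "card (PiE {..<k} E) \<le> QQ * cover_number \<delta> (moran E)"
proof -
  obtain j where "2 * c ^ j * rr \<le> \<delta>" using level_exists d0 by blast
  from cover_upper_ex[OF E this] obtain C0 where "finite C0" "moran E \<subseteq> \<Union>C0" "\<forall>S\<in>C0. diameter S \<le> \<delta>"
    by blast
  from cover_obtain[OF this] obtain C where C: "finite C" "card C = cover_number \<delta> (moran E)" "moran E \<subseteq> \<Union>C"
    "\<forall>S\<in>C. diameter S \<le> \<delta>"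
    by blast
  define ext where "ext = (\<lambda>w j. if j < k then w j else (SOME x. x \<in> E j))"
  have ext_in: "\<forall>j. ext w j \<in> E j" if "w \<in> PiE {..<k} E" for w
    using that En some_in_eq unfolding ext_def by auto
  have agree: "\<forall>j<k. ext w j = w j" for w unfolding ext_def by auto
  define X where "X = (\<lambda>w. digit_map A (ext w))"
  have XK: "X w \<in> moran E" if "w \<in> PiE {..<k} E" for w
    unfolding X_def moran_def using ext_in[OF that] by auto
  define W where "W = (\<lambda>S. {w \<in> PiE {..<k} E. X w \<in> S})"
  define L where "L = int_vecs \<inter> cball (0::real^'a) (1 + 2 * rr)"
  have finL: "finite L" unfolding L_def by (rule finite_lattice_ball)
  have fin: "finite (PiE {..<k} E)" using E D_finite by (auto intro!: finite_PiE intro: finite_subset)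
  have WQ: "card (W S) \<le> QQ" if S: "S \<in> C" for S
  proof (cases "W S = {}")
    case True then show ?thesis by simp
  next
    case False
    then obtain w0 where w0: "w0 \<in> W S" by auto
    have bS: "bounded S" using bnd C(4) S by auto
    define f where "f = (\<lambda>w. zf A w k - zf A w0 k)"
    have inR: "\<forall>j<k. w j \<in> R" if "w \<in> PiE {..<k} E" for w using that E DR by auto
    have "inj_on f (W S)"
    proof (rule inj_onI)
      fix w v assume wv: "w \<in> W S" "v \<in> W S" "f w = f v"
      then have "zf A w k = zf A v k" unfolding f_def by simp
      then have "\<forall>j<k. w j = v j" using zf_inj inR wv unfolding W_def by blast
      then show "w = v" using wv unfolding W_def by (auto intro: PiE_ext)
    qed
    moreover have "f ` W S \<subseteq> L"
    proof
      fix z assume "z \<in> f ` W S"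
      then obtain w where w: "w \<in> W S" "z = f w" by auto
      have wP: "w \<in> PiE {..<k} E" "w0 \<in> PiE {..<k} E" using w w0 unfolding W_def by auto
      have "z \<in> int_vecs" unfolding w f_def using inR[OF wP(1)] inR[OF wP(2)] R_int
        by (intro int_vecs_diff zf_int) auto
      moreover have "norm z \<le> 1 + 2 * rr"
      proof -
        have "zf A w k = ap k (pp (ext w) k)" "zf A w0 k = ap k (pp (ext w0) k)"
          using ap_pp pp_cong agree by metis+
        then have "z = ap k (pp (ext w) k - pp (ext w0) k)" unfolding w f_def by (simp add: ap_diff)
        then have nz: "norm z = norm (pp (ext w) k - pp (ext w0) k) / c ^ k" by (simp add: ap_norm)
        have "dist (X w) (X w0) \<le> diameter S"
          using bS w w0 unfolding W_def by (intro diameter_bounded_bound) auto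
        then have d1: "norm (X w - X w0) \<le> c ^ k" using C(4) S dk by (simp add: dist_norm) (meson order_trans)
        have d2: "norm (X w - pp (ext w) k) \<le> c ^ k * rr" "norm (X w0 - pp (ext w0) k) \<le> c ^ k * rr"
          unfolding X_def using near_pp[OF E] ext_in wP by auto
        have eq: "pp (ext w) k - pp (ext w0) k = ((X w - X w0) - (X w - pp (ext w) k)) + (X w0 - pp (ext w0) k)"
          by simp
        have "norm (pp (ext w) k - pp (ext w0) k) \<le> norm ((X w - X w0) - (X w - pp (ext w) k)) + norm (X w0 - pp (ext w0) k)"
          unfolding eq by (rule norm_triangle_ineq)
        also have "\<dots> \<le> norm (X w - X w0) + norm (X w - pp (ext w) k) + norm (X w0 - pp (ext w0) k)"
          using norm_triangle_ineq4[of "X w - X w0" "X w - pp (ext w) k"] by simp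
        also have "\<dots> \<le> c ^ k * (1 + 2 * rr)" using d1 d2 by (simp add: algebra_simps)
        finally show ?thesis using nz c0 by (simp add: divide_le_eq mult.commute)
      qed
      ultimately show "z \<in> L" unfolding L_def by auto
    qed
    ultimately have "card (W S) \<le> card L" using finL by (rule card_inj_on_le)
    then show ?thesis unfolding QQ_def L_def .
  qed
  have "PiE {..<k} E \<subseteq> (\<Union>S\<in>C. W S)"
    using XK C(3) unfolding W_def by blast
  then have "card (PiE {..<k} E) \<le> card (\<Union>S\<in>C. W S)"
    using C(1) fin unfolding W_def by (intro card_mono) auto
  also have "\<dots> \<le> (\<Sum>S\<in>C. card (W S))" by (rule card_UN_le[OF C(1)])
  also have "\<dots> \<le> (\<Sum>S\<in>C. QQ)" by (rule sum_mono) (use WQ in auto)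
  also have "\<dots> = QQ * cover_number \<delta> (moran E)" using C(2) by simp
  finally show ?thesis .
qed

end


definition kof :: "real \<Rightarrow> real \<Rightarrow> nat" where "kof c \<delta> = nat \<lfloor>ln \<delta> / ln c\<rfloor>"

lemma kof_bracket:
  fixes c \<delta> :: real
  assumes c: "0 < c" "c < 1" and d: "0 < \<delta>" "\<delta> < 1"
  shows "real (kof c \<delta>) * ln c \<ge> ln \<delta>" "(real (kof c \<delta>) + 1) * ln c < ln \<delta>"
    "\<delta> \<le> c ^ kof c \<delta>" "c ^ Suc (kof c \<delta>) < \<delta>"
proof -
  have lc: "ln c < 0" using c by simp
  have ld: "ln \<delta> < 0" using d by simp
  define t where "t = ln \<delta> / ln c"
  have t0: "0 < t" unfolding t_def using lc ld by (simp add: divide_neg_neg)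
  have kt: "real (kof c \<delta>) = of_int \<lfloor>t\<rfloor>" unfolding kof_def t_def[symmetric] using t0 by simp
  have "of_int \<lfloor>t\<rfloor> \<le> t" "t < of_int \<lfloor>t\<rfloor> + 1" by linarith+
  then have a: "real (kof c \<delta>) \<le> t" "t < real (kof c \<delta>) + 1" using kt by auto
  have lt: "ln \<delta> = t * ln c" unfolding t_def using lc by simp
  show 1: "real (kof c \<delta>) * ln c \<ge> ln \<delta>" unfolding lt using a lc by (simp add: mult_right_mono_neg)
  show 2: "(real (kof c \<delta>) + 1) * ln c < ln \<delta>" unfolding lt using a lc by (simp add: mult_strict_right_mono_neg)
  have "ln (c ^ kof c \<delta>) = real (kof c \<delta>) * ln c" using c by (simp add: ln_realpow)
  then show "\<delta> \<le> c ^ kof c \<delta>" using 1 c d by (metis ln_le_cancel_iff zero_less_power)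
  have "ln (c ^ Suc (kof c \<delta>)) = (real (kof c \<delta>) + 1) * ln c" using c ln_realpow[of c "Suc (kof c \<delta>)"]
    by (simp only: of_nat_Suc add.commute)
  then show "c ^ Suc (kof c \<delta>) < \<delta>" using 2 c d by (metis ln_less_cancel_iff zero_less_power)
qed

lemma kof_tendsto:
  fixes c :: real
  assumes c: "0 < c" "c < 1"
  shows "filterlim (kof c) sequentially (at_right 0)"
  unfolding filterlim_at_top
proof
  fix Z :: nat
  have "0 < min (c ^ Z) 1" using c by simp
  then have "eventually (\<lambda>x. x \<in> {0<..<min (c ^ Z) 1}) (at_right (0::real))" by (rule eventually_at_right_real)
  then show "eventually (\<lambda>x. Z \<le> kof c x) (at_right 0)"
  proof (rule eventually_mono)
    fix x assume x: "x \<in> {0<..<min (c ^ Z) 1}"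
    then have b: "c ^ Suc (kof c x) < x" using kof_bracket c by auto
    show "Z \<le> kof c x"
    proof (rule ccontr)
      assume "\<not> Z \<le> kof c x"
      then have "Suc (kof c x) \<le> Z" by simp
      then have "c ^ Z \<le> c ^ Suc (kof c x)" using c by (intro power_decreasing) auto
      then show False using b x by auto
    qed
  qed
qed


lemma floor_step:
  fixes p :: real assumes "0 \<le> p" "p \<le> 1"
  shows "\<lfloor>real (Suc j) * p\<rfloor> - \<lfloor>real j * p\<rfloor> \<in> {0, 1}"
proof -
  have e: "real (Suc j) * p = real j * p + p" by (simp add: algebra_simps)
  have "\<lfloor>real j * p\<rfloor> \<le> \<lfloor>real j * p + p\<rfloor>" using assms by (intro floor_mono) simp
  moreover have "\<lfloor>real j * p + p\<rfloor> \<le> \<lfloor>real j * p\<rfloor> + 1" using assms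
    by (metis add_le_cancel_left floor_add_int floor_mono floor_of_int of_int_1)
  ultimately show ?thesis unfolding e by auto
qed

lemma floor_over_n:
  fixes p :: real assumes "0 \<le> p"
  shows "(\<lambda>k. real_of_int \<lfloor>real k * p\<rfloor> / real k) \<longlonglongrightarrow> p"
proof (rule real_tendsto_sandwich)
  show "eventually (\<lambda>k. p - 1 / real k \<le> real_of_int \<lfloor>real k * p\<rfloor> / real k) sequentially"
    using eventually_gt_at_top[of 0]
  proof (rule eventually_mono)
    fix k :: nat assume k: "0 < k"
    have "real k * p - 1 \<le> real_of_int \<lfloor>real k * p\<rfloor>" by linarith
    then have "(real k * p - 1) / real k \<le> real_of_int \<lfloor>real k * p\<rfloor> / real k" using k
      by (intro divide_right_mono) auto
    moreover have "(real k * p - 1) / real k = p - 1 / real k" using k by (simp add: diff_divide_distrib)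
    ultimately show "p - 1 / real k \<le> real_of_int \<lfloor>real k * p\<rfloor> / real k" by simp
  qed
  show "eventually (\<lambda>k. real_of_int \<lfloor>real k * p\<rfloor> / real k \<le> p) sequentially"
    using eventually_gt_at_top[of 0]
  proof (rule eventually_mono)
    fix k :: nat assume k: "0 < k"
    have "real_of_int \<lfloor>real k * p\<rfloor> \<le> real k * p" by linarith
    then show "real_of_int \<lfloor>real k * p\<rfloor> / real k \<le> p" using k
      by (simp add: field_simps)
  qed
  show "(\<lambda>k. p - 1 / real k) \<longlonglongrightarrow> p" using tendsto_diff[OF tendsto_const lim_const_over_n[of 1]] by simp
  show "(\<lambda>k. p) \<longlonglongrightarrow> p" by simp
qed

lemma seq_limit_construct:
  fixes g :: "nat \<Rightarrow> real" and p lm :: real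
  assumes "0 \<le> p" and g: "\<And>j. j \<ge> K \<Longrightarrow> g j = real_of_int (\<lfloor>real (Suc j) * p\<rfloor> - \<lfloor>real j * p\<rfloor>) * lm"
  shows "(\<lambda>k. (\<Sum>j<k. g j) / real k) \<longlonglongrightarrow> p * lm"
proof -
  define h where "h j = g j - real_of_int (\<lfloor>real (Suc j) * p\<rfloor> - \<lfloor>real j * p\<rfloor>) * lm" for j
  have hK: "(\<Sum>j<k. h j) = (\<Sum>j<K. h j)" if "K \<le> k" for k
    using that
  proof (induction k rule: dec_induct)
    case (step k) then show ?case using g[of k] by (simp add: h_def)
  qed simp
  have tel: "(\<Sum>j<k. real_of_int (\<lfloor>real (Suc j) * p\<rfloor> - \<lfloor>real j * p\<rfloor>)) = real_of_int \<lfloor>real k * p\<rfloor>" for k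
    using sum_lessThan_telescope[of "\<lambda>j. real_of_int \<lfloor>real j * p\<rfloor>" k] by simp
  have eq: "(\<Sum>j<k. g j) = (\<Sum>j<k. h j) + real_of_int \<lfloor>real k * p\<rfloor> * lm" for k
  proof -
    have "(\<Sum>j<k. g j) = (\<Sum>j<k. h j) + (\<Sum>j<k. real_of_int (\<lfloor>real (Suc j) * p\<rfloor> - \<lfloor>real j * p\<rfloor>)) * lm"
      unfolding h_def sum_subtractf sum_distrib_right by simp
    then show ?thesis unfolding tel .
  qed
  have ev: "eventually (\<lambda>k. (\<Sum>j<K. h j) / real k + real_of_int \<lfloor>real k * p\<rfloor> / real k * lm = (\<Sum>j<k. g j) / real k) sequentially"
    using eventually_ge_at_top[of K]
  proof (rule eventually_mono)
    fix k assume "K \<le> k"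
    then show "(\<Sum>j<K. h j) / real k + real_of_int \<lfloor>real k * p\<rfloor> / real k * lm = (\<Sum>j<k. g j) / real k"
      unfolding eq hK[OF \<open>K \<le> k\<close>] by (simp add: add_divide_distrib)
  qed
  have "(\<lambda>k. (\<Sum>j<K. h j) / real k + real_of_int \<lfloor>real k * p\<rfloor> / real k * lm) \<longlonglongrightarrow> 0 + p * lm"
    by (intro tendsto_intros floor_over_n assms(1))
  then show ?thesis using tendsto_cong[OF ev] by simp
qed

lemma parallelogram_unique:
  fixes D :: "'a::real_inner set"
  assumes "finite D" "D \<noteq> {}"
  shows "\<exists>d1\<in>D. \<exists>d2\<in>D. {d\<in>D. d - (d1 - d2) \<in> D} = {d1}"
proof -
  let ?P = "D \<times> D"
  have "finite ?P" "?P \<noteq> {}" using assms by auto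
  define f where "f q = norm (fst q - snd q)" for q :: "'a \<times> 'a"
  have "Max (f ` ?P) \<in> f ` ?P" using \<open>finite ?P\<close> \<open>?P \<noteq> {}\<close> by (intro Max_in) auto
  then obtain q where q1: "q \<in> ?P" "f q = Max (f ` ?P)" by auto
  have "\<forall>q'\<in>?P. f q' \<le> f q" unfolding q1(2) using \<open>finite ?P\<close> by (intro ballI Max_ge) auto
  then have q: "q \<in> ?P" "\<forall>q'\<in>?P. norm (fst q' - snd q') \<le> norm (fst q - snd q)"
    using q1 unfolding f_def by auto
  obtain d1 d2 where dd: "q = (d1, d2)" by (cases q)
  have d12: "d1 \<in> D" "d2 \<in> D" using q dd by auto
  have mx: "norm (a - b) \<le> norm (d1 - d2)" if "a \<in> D" "b \<in> D" for a b using q(2) that dd by force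
  have "{d\<in>D. d - (d1 - d2) \<in> D} \<subseteq> {d1}"
  proof
    fix d assume d: "d \<in> {d\<in>D. d - (d1 - d2) \<in> D}"
    define d' where "d' = d - (d1 - d2)"
    define v where "v = d1 - d2"
    define w where "w = d' - d2"
    have "d' \<in> D" using d d'_def by auto
    have n1: "norm (w + v) \<le> norm v" using mx[of d d2] d d12 unfolding w_def v_def d'_def by (simp add: algebra_simps)
    have n2: "norm (v - w) \<le> norm v" using mx[of d1 d'] \<open>d' \<in> D\<close> d12 unfolding w_def v_def d'_def by (simp add: algebra_simps)
    have "norm (w + v)^2 + norm (v - w)^2 = 2 * (norm v)^2 + 2 * (norm w)^2"
      by (simp add: power2_norm_eq_inner inner_add inner_diff inner_commute)
    moreover have "norm (w + v)^2 \<le> (norm v)^2" "norm (v - w)^2 \<le> (norm v)^2"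
      using n1 n2 by (auto intro: power_mono)
    ultimately have "(norm w)^2 \<le> 0" by linarith
    then have "w = 0" by simp
    then show "d \<in> {d1}" unfolding w_def d'_def by (simp add: algebra_simps)
  qed
  moreover have "d1 \<in> {d\<in>D. d - (d1 - d2) \<in> D}" using d12 by simp
  ultimately show ?thesis using d12 by blast
qed


lemma diam_unbounded_least:
  fixes T :: "'a::metric_space set"
  assumes "\<not> bounded T"
  shows "diameter T = (LEAST z::real. False)"
proof -
  have ne: "T \<noteq> {}" using assms by auto
  let ?X = "(\<lambda>(x, y). dist x y) ` (T \<times> T)"
  have nb: "\<not> bdd_above ?X"
  proof
    assume "bdd_above ?X"
    then obtain B where B: "\<forall>x\<in>T. \<forall>y\<in>T. dist x y \<le> B" unfolding bdd_above_def by force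
    obtain x0 where "x0 \<in> T" using ne by auto
    then have "bounded T" unfolding bounded_def using B by blast
    then show False using assms by simp
  qed
  have pr: "(\<lambda>z. \<forall>x\<in>?X. x \<le> z) = (\<lambda>z. False)"
  proof (rule ext)
    fix z show "(\<forall>x\<in>?X. x \<le> z) = False" using nb unfolding bdd_above_def by blast
  qed
  have "diameter T = Sup ?X" unfolding diameter_def using ne by simp
  also have "\<dots> = (LEAST z::real. \<forall>x\<in>?X. x \<le> z)" by (rule Sup_real_def)
  also have "\<dots> = (LEAST z::real. False)" by (simp only: pr)
  finally show ?thesis .
qed

lemma diam_unbounded:
  fixes S :: "'a::euclidean_space set"
  assumes "\<not> bounded S"
  shows "diameter S = diameter (UNIV :: 'a set)"
proof -
  have "\<not> bounded (UNIV :: 'a set)" by simp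
  then show ?thesis using diam_unbounded_least[OF assms] diam_unbounded_least by metis
qed

lemma box_from_lim:
  fixes F :: "'a::metric_space set"
  assumes "F \<noteq> {}" "bounded F" "((\<lambda>\<delta>. ln (real (cover_number \<delta> F)) / (- ln \<delta>)) \<longlongrightarrow> d) (at_right 0)"
  shows "box_dim_exists F \<and> box_dim F = d"
  using assms unfolding box_dim_exists_def box_dim_def by (auto intro: tendsto_Lim)

lemma cover_one:
  fixes F :: "'a::euclidean_space set"
  assumes "F \<noteq> {}" "diameter (UNIV :: 'a set) \<le> 0" "0 < \<delta>"
  shows "cover_number \<delta> F = 1"
proof -
  have c: "finite {UNIV::'a set}" "F \<subseteq> \<Union>{UNIV::'a set}" "\<forall>S\<in>{UNIV::'a set}. diameter S \<le> \<delta>" using assms by auto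
  have "cover_number \<delta> F \<le> 1" using cover_le[OF c] by simp
  moreover obtain C where C: "finite C" "card C = cover_number \<delta> F" "F \<subseteq> \<Union>C"
    using cover_obtain[OF c] by blast
  have "cover_number \<delta> F \<noteq> 0"
  proof
    assume "cover_number \<delta> F = 0"
    then have "C = {}" using C by simp
    then show False using C(3) assms(1) by simp
  qed
  ultimately show ?thesis by simp
qed

lemma dim_zero_case:
  fixes F :: "'a::euclidean_space set"
  assumes "F \<noteq> {}" "bounded F" "diameter (UNIV :: 'a set) \<le> 0"
  shows "box_dim_exists F \<and> box_dim F = 0"
proof (rule box_from_lim[OF assms(1,2)])
  have "eventually (\<lambda>\<delta>. 0 = ln (real (cover_number \<delta> F)) / (- ln \<delta>)) (at_right 0)"
    using eventually_at_right_real[OF zero_less_one[where 'a=real]]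
  proof (rule eventually_mono)
    fix x :: real assume "x \<in> {0<..<1}"
    then have "cover_number x F = 1" using assms by (intro cover_one) auto
    then show "0 = ln (real (cover_number x F)) / (- ln x)" by simp
  qed
  then show "((\<lambda>\<delta>. ln (real (cover_number \<delta> F)) / (- ln \<delta>)) \<longlongrightarrow> 0) (at_right 0)"
    by (rule Lim_transform_eventually[OF tendsto_const])
qed


context moran_setting begin

lemma moran_dim:
  assumes E: "\<forall>j. E j \<subseteq> D" and En: "\<forall>j. E j \<noteq> {}"
    and u0: "0 < \<delta>0" and u: "\<forall>\<delta>. 0 < \<delta> \<and> \<delta> < \<delta>0 \<longrightarrow> (\<forall>S::(real^'a) set. diameter S \<le> \<delta> \<longrightarrow> bounded S)"
    and lim: "(\<lambda>k. ln (real (card (PiE {..<k} E))) / real k) \<longlonglongrightarrow> L"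
  shows "((\<lambda>\<delta>. ln (real (cover_number \<delta> (moran E))) / (- ln \<delta>)) \<longlongrightarrow> L / ln (1/c)) (at_right 0)"
proof -
  define N where "N k = card (PiE {..<k} E)" for k
  define l where "l = - ln c"
  have l0: "0 < l" unfolding l_def using c0 c1 by simp
  have l1: "ln (1/c) = l" unfolding l_def using c0 by (simp add: ln_div)
  have N1: "1 \<le> N k" for k
  proof -
    have "finite (PiE {..<k} E)" using E D_finite by (auto intro!: finite_PiE intro: finite_subset)
    moreover have "PiE {..<k} E \<noteq> {}" using En by (simp add: PiE_eq_empty_iff)
    ultimately show ?thesis unfolding N_def by (simp add: Suc_le_eq card_gt_0_iff)
  qed
  obtain k0 where k0: "2 * c ^ k0 * rr \<le> c" using level_exists c0 by blast
  define a where "a k = ln (real (N k)) / real k" for k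
  have aL: "a \<longlonglongrightarrow> L" using lim unfolding a_def N_def .
  have lnN: "ln (real (N k)) = a k * real k" for k
  proof (cases "k = 0")
    case True then show ?thesis unfolding N_def by simp
  qed (simp add: a_def)
  define g1 where "g1 k = (ln (real (N k)) - ln (real QQ)) / ((real k + 1) * l)" for k
  define g2 where "g2 k = ln (real (N (k + k0))) / (real k * l)" for k
  have g1_lim: "g1 \<longlonglongrightarrow> L / l"
  proof -
    have eq: "g1 k = (a k * (real k / real (Suc k)) - ln (real QQ) * inverse (real (Suc k))) / l" for k
    proof -
      have p: "real (Suc k) = real k + 1" "real k + 1 > 0" by auto
      have "a k * (real k / (real k + 1)) - ln (real QQ) * inverse (real k + 1) = (a k * real k - ln (real QQ)) / (real k + 1)"
        using p(2) by (simp add: diff_divide_distrib inverse_eq_divide)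
      then show ?thesis unfolding g1_def lnN p(1) by (simp add: divide_divide_eq_left mult.commute)
    qed
    have "(\<lambda>k. (a k * (real k / real (Suc k)) - ln (real QQ) * inverse (real (Suc k))) / l) \<longlonglongrightarrow> (L * 1 - ln (real QQ) * 0) / l"
      by (intro tendsto_intros aL LIMSEQ_n_over_Suc_n LIMSEQ_inverse_real_of_nat) (use l0 in auto)
    then show ?thesis unfolding eq by simp
  qed
  have g2_lim: "g2 \<longlonglongrightarrow> L / l"
  proof -
    have eq: "eventually (\<lambda>k. a (k + k0) * (1 + real k0 / real k) / l = g2 k) sequentially"
      using eventually_gt_at_top[of 0]
    proof (rule eventually_mono)
      fix k :: nat assume "0 < k"
      then show "a (k + k0) * (1 + real k0 / real k) / l = g2 k"
        unfolding g2_def lnN using l0 by (simp add: field_simps)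
    qed
    have "(\<lambda>k. a (k + k0) * (1 + real k0 / real k) / l) \<longlonglongrightarrow> L * (1 + 0) / l"
      by (intro tendsto_intros LIMSEQ_ignore_initial_segment[OF aL] lim_const_over_n) (use l0 in auto)
    then show ?thesis using tendsto_cong[OF eq] by simp
  qed
  define f where "f \<delta> = ln (real (cover_number \<delta> (moran E))) / (- ln \<delta>)" for \<delta>
  have bounds: "g1 (kof c \<delta>) \<le> f \<delta> \<and> f \<delta> \<le> g2 (kof c \<delta>)" if d: "0 < \<delta>" "\<delta> < min \<delta>0 c" for \<delta>
  proof -
    define k where "k = kof c \<delta>"
    have d1: "\<delta> < 1" using d c1 by auto
    have br: "\<delta> \<le> c ^ k" "c ^ Suc k < \<delta>" "real k * ln c \<ge> ln \<delta>" "(real k + 1) * ln c < ln \<delta>"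
      using kof_bracket[OF c0 c1 d(1) d1] unfolding k_def by auto
    have k1: "1 \<le> k"
    proof (rule ccontr)
      assume "\<not> 1 \<le> k" then have "k = 0" by simp
      then show False using br(2) d by simp
    qed
    have bnd: "\<forall>S::(real^'a) set. diameter S \<le> \<delta> \<longrightarrow> bounded S" using u d by auto
    have "2 * c ^ (k + k0) * rr = c ^ k * (2 * c ^ k0 * rr)" by (simp add: power_add)
    also have "\<dots> \<le> c ^ k * c" using k0 c0 by (simp add: mult_left_mono)
    also have "\<dots> = c ^ Suc k" by simp
    finally have "2 * c ^ (k + k0) * rr \<le> \<delta>" using br(2) by simp
    then have up: "cover_number \<delta> (moran E) \<le> N (k + k0)" unfolding N_def by (rule cover_upper[OF E])
    have lo: "N k \<le> QQ * cover_number \<delta> (moran E)"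
      unfolding N_def by (rule cover_lower[OF E En d(1) br(1) bnd])
    then have cov1: "1 \<le> cover_number \<delta> (moran E)" and Q1: "1 \<le> QQ" using N1[of k]
      by (metis One_nat_def Suc_le_eq mult_eq_0_iff not_gr0 le_0_eq)+
    define cv where "cv = real (cover_number \<delta> (moran E))"
    have cv1: "1 \<le> cv" unfolding cv_def using cov1 by simp
    have lc0: "0 \<le> ln cv" using cv1 by simp
    have md1: "real k * l \<le> - ln \<delta>" using br(3) unfolding l_def by simp
    have md2: "- ln \<delta> < (real k + 1) * l" using br(4) unfolding l_def by simp
    have kl0: "0 < real k * l" using k1 l0 by simp
    have "f \<delta> = ln cv / (- ln \<delta>)" unfolding f_def cv_def ..
    also have "\<dots> \<le> ln cv / (real k * l)" using lc0 kl0 md1 by (intro divide_left_mono) (auto simp: mult_neg_pos)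
    also have "\<dots> \<le> ln (real (N (k + k0))) / (real k * l)"
      using up cv1 kl0 unfolding cv_def by (intro divide_right_mono) auto
    finally have A: "f \<delta> \<le> g2 k" unfolding g2_def .
    have B: "g1 k \<le> f \<delta>"
    proof (cases "ln (real (N k)) - ln (real QQ) \<le> 0")
      case True
      then have "g1 k \<le> 0" unfolding g1_def using l0 by (simp add: divide_nonpos_pos)
      moreover have "0 \<le> f \<delta>" unfolding f_def using lc0 md1 kl0 unfolding cv_def by (intro divide_nonneg_pos) auto
      ultimately show ?thesis by simp
    next
      case False
      have "real (N k) \<le> real QQ * cv" unfolding cv_def using lo by (simp flip: of_nat_mult)
      then have "ln (real (N k)) \<le> ln (real QQ) + ln cv" using Q1 cv1 N1[of k]
        by (metis ln_le_cancel_iff ln_mult of_nat_0_less_iff less_le_trans zero_less_one mult_pos_pos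
            not_one_le_zero of_nat_1 of_nat_le_iff le_less)
      then have "ln (real (N k)) - ln (real QQ) \<le> ln cv" by simp
      then have "g1 k \<le> ln cv / ((real k + 1) * l)" unfolding g1_def using l0
        by (intro divide_right_mono) auto
      also have "\<dots> \<le> ln cv / (- ln \<delta>)" using lc0 md2 kl0 md1
        by (intro divide_left_mono) (auto simp: mult_pos_neg)
      finally show ?thesis unfolding f_def cv_def .
    qed
    show ?thesis using A B unfolding k_def by simp
  qed
  have ev: "eventually (\<lambda>\<delta>. \<delta> \<in> {0<..<min \<delta>0 c}) (at_right (0::real))"
    using u0 c0 by (intro eventually_at_right_real) simp
  have "(f \<longlongrightarrow> L / l) (at_right 0)"
  proof (rule tendsto_sandwich)
    show "eventually (\<lambda>\<delta>. g1 (kof c \<delta>) \<le> f \<delta>) (at_right 0)"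
      using ev by (rule eventually_mono) (use bounds in auto)
    show "eventually (\<lambda>\<delta>. f \<delta> \<le> g2 (kof c \<delta>)) (at_right 0)"
      using ev by (rule eventually_mono) (use bounds in auto)
    show "((\<lambda>\<delta>. g1 (kof c \<delta>)) \<longlongrightarrow> L / l) (at_right 0)"
      by (rule filterlim_compose[OF g1_lim kof_tendsto[OF c0 c1]])
    show "((\<lambda>\<delta>. g2 (kof c \<delta>)) \<longlongrightarrow> L / l) (at_right 0)"
      by (rule filterlim_compose[OF g2_lim kof_tendsto[OF c0 c1]])
  qed
  then show ?thesis unfolding f_def l1 .
qed

end


context moran_setting begin

lemma Tset_moran: "Tset A E0 = moran (\<lambda>_. E0)"
  unfolding Tset_def moran_def ..

lemma diff_bound': "x \<in> diffset D \<Longrightarrow> norm x \<le> 2 * M"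
proof -
  assume "x \<in> diffset D"
  then obtain a b where ab: "a \<in> D" "b \<in> D" "x = a - b" unfolding diffset_def by auto
  have "norm x \<le> norm a + norm b" unfolding ab(3) by (rule norm_triangle_ineq4)
  also have "\<dots> \<le> 2 * M" using DM ab(1,2) by (metis add_mono mult_2)
  finally show ?thesis .
qed

lemma Fchar: "Fset A D = Tset A (diffset D)"
proof
  show "Fset A D \<subseteq> Tset A (diffset D)"
  proof
    fix \<alpha> assume "\<alpha> \<in> Fset A D"
    then obtain x where x: "x \<in> Tset A D" "x \<in> (\<lambda>x. x + \<alpha>) ` Tset A D" unfolding Fset_def by auto
    obtain a where a: "\<forall>j. a j \<in> D" "x = digit_map A a" using x(1) unfolding Tset_def by auto
    obtain b where b: "\<forall>j. b j \<in> D" "x = digit_map A b + \<alpha>" using x(2) unfolding Tset_def by auto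
    have ba: "\<forall>j. norm (a j) \<le> M" "\<forall>j. norm (b j) \<le> M" using a b DM by auto
    have e1: "digit_map A a = digit_map A b + \<alpha>" using a b by simp
    have "\<alpha> = digit_map A (\<lambda>j. a j - b j)" unfolding dm_diff[OF ba] e1 by simp
    moreover have "\<forall>j. a j - b j \<in> diffset D" using a b unfolding diffset_def by blast
    ultimately show "\<alpha> \<in> Tset A (diffset D)" unfolding Tset_def by auto
  qed
  show "Tset A (diffset D) \<subseteq> Fset A D"
  proof
    fix \<alpha> assume "\<alpha> \<in> Tset A (diffset D)"
    then obtain e where e: "\<forall>j. e j \<in> diffset D" "\<alpha> = digit_map A e" unfolding Tset_def by auto
    have "\<forall>j. \<exists>ab. fst ab \<in> D \<and> snd ab \<in> D \<and> e j = fst ab - snd ab"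
    proof
      fix j
      obtain a b where "a \<in> D" "b \<in> D" "e j = a - b" using e(1) unfolding diffset_def by blast
      then show "\<exists>ab. fst ab \<in> D \<and> snd ab \<in> D \<and> e j = fst ab - snd ab" by (intro exI[of _ "(a, b)"]) simp
    qed
    from choice[OF this] obtain q where q: "\<forall>j. fst (q j) \<in> D \<and> snd (q j) \<in> D \<and> e j = fst (q j) - snd (q j)"
      by blast
    define a where "a j = fst (q j)" for j
    define b where "b j = snd (q j)" for j
    have ab: "\<forall>j. a j \<in> D" "\<forall>j. b j \<in> D" "\<forall>j. e j = a j - b j" using q unfolding a_def b_def by auto
    have ba: "\<forall>j. norm (a j) \<le> M" "\<forall>j. norm (b j) \<le> M" using ab DM by auto
    have ee: "e = (\<lambda>j. a j - b j)" using ab(3) by auto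
    have "digit_map A a = digit_map A b + \<alpha>" unfolding e(2) ee dm_diff[OF ba] by simp
    moreover have "digit_map A a \<in> Tset A D" "digit_map A b \<in> Tset A D"
      using ab unfolding Tset_def by auto
    ultimately show "\<alpha> \<in> Fset A D" unfolding Fset_def by auto
  qed
qed

lemma inter_moran:
  assumes dd: "\<forall>j. dl j \<in> diffset D"
    and uq: "\<forall>e. is_rep A (diffset D) (digit_map A dl) e \<longrightarrow> e = dl"
  shows "Tset A D \<inter> ((\<lambda>x. x + digit_map A dl) ` Tset A D) = moran (\<lambda>j. {d\<in>D. d - dl j \<in> D})"
proof
  have dlb: "\<forall>j. norm (dl j) \<le> 2 * M" using dd diff_bound' by auto
  show "Tset A D \<inter> ((\<lambda>x. x + digit_map A dl) ` Tset A D) \<subseteq> moran (\<lambda>j. {d\<in>D. d - dl j \<in> D})"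
  proof
    fix x assume x: "x \<in> Tset A D \<inter> ((\<lambda>x. x + digit_map A dl) ` Tset A D)"
    obtain a where a: "\<forall>j. a j \<in> D" "x = digit_map A a" using x unfolding Tset_def by auto
    obtain b where b: "\<forall>j. b j \<in> D" "x = digit_map A b + digit_map A dl" using x unfolding Tset_def by auto
    have ba: "\<forall>j. norm (a j) \<le> M" "\<forall>j. norm (b j) \<le> M" using a b DM by auto
    have e1: "digit_map A a = digit_map A b + digit_map A dl" using a b by simp
    have "digit_map A (\<lambda>j. a j - b j) = digit_map A dl" unfolding dm_diff[OF ba] e1 by simp
    moreover have "\<forall>j. a j - b j \<in> diffset D" using a b unfolding diffset_def by blast
    ultimately have "(\<lambda>j. a j - b j) = dl" using uq[rule_format, of "\<lambda>j. a j - b j"] unfolding is_rep_def by simp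
    then have "\<forall>j. a j - dl j = b j" by auto
    then have "\<forall>j. a j \<in> {d\<in>D. d - dl j \<in> D}" using a b by auto
    then show "x \<in> moran (\<lambda>j. {d\<in>D. d - dl j \<in> D})" unfolding moran_def using a by auto
  qed
  show "moran (\<lambda>j. {d\<in>D. d - dl j \<in> D}) \<subseteq> Tset A D \<inter> ((\<lambda>x. x + digit_map A dl) ` Tset A D)"
  proof
    fix x assume "x \<in> moran (\<lambda>j. {d\<in>D. d - dl j \<in> D})"
    then obtain a where a: "\<forall>j. a j \<in> D \<and> a j - dl j \<in> D" "x = digit_map A a" unfolding moran_def by auto
    have ba: "\<forall>j. norm (a j) \<le> M" using a DM by auto
    have "digit_map A (\<lambda>j. a j - dl j) = x - digit_map A dl" using dm_diff[OF ba dlb] a by simp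
    moreover have "digit_map A (\<lambda>j. a j - dl j) \<in> Tset A D" using a unfolding Tset_def by auto
    ultimately have "x \<in> (\<lambda>x. x + digit_map A dl) ` Tset A D" by (auto intro!: image_eqI[where x="x - digit_map A dl"])
    moreover have "x \<in> Tset A D" using a unfolding Tset_def by auto
    ultimately show "x \<in> Tset A D \<inter> ((\<lambda>x. x + digit_map A dl) ` Tset A D)" by simp
  qed
qed

lemma moran_ne: "\<forall>j. E j \<noteq> {} \<Longrightarrow> moran E \<noteq> {}"
proof -
  assume En: "\<forall>j. E j \<noteq> {}"
  have "\<forall>j. (SOME x. x \<in> E j) \<in> E j" using En some_in_eq by blast
  then have "(\<lambda>j. SOME x. x \<in> E j) \<in> {e. \<forall>j. e j \<in> E j}" by simp
  then have "digit_map A (\<lambda>j. SOME x. x \<in> E j) \<in> moran E" unfolding moran_def by (rule imageI)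
  then show "moran E \<noteq> {}" by (simp only: ex_in_conv[symmetric]) (rule exI)
qed

lemma moran_box:
  assumes E: "\<forall>j. E j \<subseteq> D" and En: "\<forall>j. E j \<noteq> {}"
    and u0: "0 < \<delta>0" and u: "\<forall>\<delta>. 0 < \<delta> \<and> \<delta> < \<delta>0 \<longrightarrow> (\<forall>S::(real^'a) set. diameter S \<le> \<delta> \<longrightarrow> bounded S)"
    and lim: "(\<lambda>k. ln (real (card (PiE {..<k} E))) / real k) \<longlonglongrightarrow> L"
  shows "box_dim_exists (moran E) \<and> box_dim (moran E) = L / ln (1/c)"
  by (rule box_from_lim[OF moran_ne[OF En] bounded_subset[OF bounded_cball moran_bounded[OF E]]
        moran_dim[OF E En u0 u lim]])

end


theorem mainTheorem9:
  fixes A :: "real^'n^'n" and D :: "(real^'n) set" and lam :: real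
  assumes "int_matrix A" and "invertible A"
    and "is_similarity (\<lambda>x. matrix_inv A *v x)"
    and "\<exists>R. complete_residue_system A R \<and> D \<subseteq> R"
    and "\<forall>x\<in>Tset A (diffset D). \<exists>!e. is_rep A (diffset D) x e"
    and "0 \<le> lam" and "lam \<le> box_dim (Tset A D)"
  shows "Fset A D \<subseteq> closure (Phi_level A D lam)"
proof -
  obtain R where R: "complete_residue_system A R" "D \<subseteq> R" using assms(4) by blast
  obtain c where c: "0 < c" "c < 1" "\<forall>x y. norm (matrix_inv A *v x - matrix_inv A *v y) = c * norm (x - y)"
    using assms(3) unfolding is_similarity_def by blast
  have bn: "norm (matrix_inv A *v x) = c * norm x" for x using c(3)[rule_format, of x 0] by simp
  interpret setting A c R using assms(1,2) c(1,2) bn R(1) by unfold_locales auto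
  define M where "M = sum norm D"
  have finD: "finite D" using R_finite R(2) finite_subset by blast
  have DM: "\<forall>d\<in>D. norm d \<le> M" unfolding M_def using finD by (auto intro: member_le_sum)
  have M0: "0 \<le> M" unfolding M_def by (simp add: sum_nonneg)
  interpret moran_setting A c R D M using R(2) DM M0 by unfold_locales auto
  show ?thesis
  proof (cases "D = {}")
    case True
    then have "Tset A D = {}" unfolding Tset_def by auto
    then show ?thesis unfolding Fset_def by auto
  next
    case Dne: False
    define m where "m = card D"
    have m1: "1 \<le> m" unfolding m_def using Dne finD by (simp add: Suc_le_eq card_gt_0_iff)
    define u where "u = diameter (UNIV :: (real^'n) set)"
    have "Tset A D \<subseteq> cball 0 rr" unfolding Tset_moran by (rule moran_bounded) simp
    then have Tb: "bounded (Tset A D)" by (rule bounded_subset[OF bounded_cball])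
    have Tne: "Tset A D \<noteq> {}" unfolding Tset_moran using Dne by (intro moran_ne) auto
    show ?thesis
    proof (cases "u \<le> 0")
      case True
      have "box_dim (Tset A D) = 0" using dim_zero_case[OF Tne Tb True[unfolded u_def]] by (rule conjunct2)
      then have lam0: "lam = 0" using assms(6,7) by simp
      have "Fset A D \<subseteq> Phi_level A D lam"
      proof
        fix \<alpha> assume a: "\<alpha> \<in> Fset A D"
        let ?I = "Tset A D \<inter> (\<lambda>x. x + \<alpha>) ` Tset A D"
        have "?I \<noteq> {}" using a unfolding Fset_def by auto
        moreover have "bounded ?I" using Tb by (rule bounded_subset) auto
        ultimately have "box_dim_exists ?I \<and> box_dim ?I = 0" by (rule dim_zero_case[OF _ _ True[unfolded u_def]])
        then show "\<alpha> \<in> Phi_level A D lam" unfolding Phi_level_def using a lam0 by auto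
      qed
      then show ?thesis using closure_subset by blast
    next
      case upos: False
      have ubnd: "\<forall>\<delta>. 0 < \<delta> \<and> \<delta> < u \<longrightarrow> (\<forall>S::(real^'n) set. diameter S \<le> \<delta> \<longrightarrow> bounded S)"
      proof (intro allI impI)
        fix \<delta> :: real and S :: "(real^'n) set"
        assume h: "0 < \<delta> \<and> \<delta> < u" "diameter S \<le> \<delta>"
        show "bounded S"
        proof (rule ccontr)
          assume "\<not> bounded S"
          then have "diameter S = u" unfolding u_def by (rule diam_unbounded)
          then show False using h by linarith
        qed
      qed
      have u0: "0 < u" using upos by simp
      have lc: "0 < ln (1/c)" using c by simp
      have cardPi: "card (PiE {..<k} (\<lambda>_. D)) = m ^ k" for k
        unfolding m_def using finD by (simp add: card_PiE)
      have limT: "(\<lambda>k. ln (real (card (PiE {..<k} (\<lambda>_. D)))) / real k) \<longlonglongrightarrow> ln (real m)"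
      proof -
        have ev: "eventually (\<lambda>k. ln (real m) = ln (real (card (PiE {..<k} (\<lambda>_. D)))) / real k) sequentially"
          using eventually_gt_at_top[of 0]
        proof (rule eventually_mono)
          fix k :: nat assume "0 < k"
          then show "ln (real m) = ln (real (card (PiE {..<k} (\<lambda>_. D)))) / real k"
            unfolding cardPi using m1 by (simp add: ln_realpow)
        qed
        show ?thesis by (rule Lim_transform_eventually[OF tendsto_const ev])
      qed
      have "box_dim_exists (moran (\<lambda>_. D)) \<and> box_dim (moran (\<lambda>_. D)) = ln (real m) / ln (1/c)"
        by (rule moran_box[OF _ _ u0 ubnd limT]) (use Dne in auto)
      then have bT: "box_dim (Tset A D) = ln (real m) / ln (1/c)" unfolding Tset_moran by simp
      have lamb: "lam * ln (1/c) \<le> ln (real m)" using assms(7) bT lc by (simp add: pos_le_divide_eq)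
      define p where "p = (if m = 1 then 0 else lam * ln (1/c) / ln (real m))"
      have pp3: "0 \<le> p \<and> p \<le> 1 \<and> p * ln (real m) = lam * ln (1/c)"
      proof (cases "m = 1")
        case True
        then have "lam * ln (1/c) \<le> 0" using lamb by simp
        then have "lam = 0" using assms(6) lc by (simp add: mult_le_0_iff)
        then show ?thesis unfolding p_def using True by auto
      next
        case False
        then have lm: "0 < ln (real m)" using m1 by simp
        have "0 \<le> p" unfolding p_def using False lm lc assms(6) by simp
        moreover have "p \<le> 1" unfolding p_def using False lm lamb by simp
        moreover have "p * ln (real m) = lam * ln (1/c)" unfolding p_def using False lm by simp
        ultimately show ?thesis by blast
      qed
      then have p0: "0 \<le> p" and p1: "p \<le> 1" and pm: "p * ln (real m) = lam * ln (1/c)" by auto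
      show ?thesis
      proof
        fix \<alpha> assume aF: "\<alpha> \<in> Fset A D"
        show "\<alpha> \<in> closure (Phi_level A D lam)"
          unfolding closure_approachable
        proof (intro allI impI)
          fix \<epsilon> :: real assume \<epsilon>: "0 < \<epsilon>"
          obtain dl where dl: "\<forall>j. dl j \<in> diffset D" "\<alpha> = digit_map A dl"
            using aF unfolding Fchar Tset_def by auto
          obtain d1 d2 where d12: "d1 \<in> D" "d2 \<in> D" "{d\<in>D. d - (d1 - d2) \<in> D} = {d1}"
            using parallelogram_unique[OF finD Dne] by blast
          obtain d0 where d0: "d0 \<in> D" using Dne by auto
          have "0 < \<epsilon> * (1 - c) / (4 * M + 1)" using \<epsilon> c M0 by simp
          then obtain K where K: "c ^ K < \<epsilon> * (1 - c) / (4 * M + 1)" using real_arch_pow_inv c(2) by blast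
          define s where "s j = \<lfloor>real (Suc j) * p\<rfloor> - \<lfloor>real j * p\<rfloor>" for j
          have s01: "s j \<in> {0, 1}" for j unfolding s_def by (rule floor_step[OF p0 p1])
          define dl' where "dl' j = (if j < K then dl j else if s j = 1 then 0 else d1 - d2)" for j
          have z: "0 \<in> diffset D" using d0 unfolding diffset_def by force
          have z2: "d1 - d2 \<in> diffset D" using d12 unfolding diffset_def by blast
          have dl'D: "\<forall>j. dl' j \<in> diffset D" unfolding dl'_def using dl(1) z z2 by auto
          define \<alpha>' where "\<alpha>' = digit_map A dl'"
          have a'T: "\<alpha>' \<in> Tset A (diffset D)" unfolding \<alpha>'_def Tset_def using dl'D by auto
          have uq: "\<forall>e. is_rep A (diffset D) (digit_map A dl') e \<longrightarrow> e = dl'"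
          proof (intro allI impI)
            fix e assume "is_rep A (diffset D) (digit_map A dl') e"
            moreover have "is_rep A (diffset D) (digit_map A dl') dl'" unfolding is_rep_def using dl'D by simp
            moreover have "\<exists>!e. is_rep A (diffset D) (digit_map A dl') e"
              using assms(5) a'T unfolding \<alpha>'_def by blast
            ultimately show "e = dl'" by blast
          qed
          define E' where "E' j = {d\<in>D. d - dl' j \<in> D}" for j
          have inter: "Tset A D \<inter> (\<lambda>x. x + \<alpha>') ` Tset A D = moran E'"
            unfolding \<alpha>'_def E'_def by (rule inter_moran[OF dl'D uq])
          have E'D: "\<forall>j. E' j \<subseteq> D" unfolding E'_def by auto
          have E'ne: "\<forall>j. E' j \<noteq> {}"
          proof
            fix j
            obtain a b where "a \<in> D" "b \<in> D" "dl' j = a - b" using dl'D unfolding diffset_def by blast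
            then have "a \<in> E' j" unfolding E'_def by simp
            then show "E' j \<noteq> {}" by blast
          qed
          have cardE: "ln (real (card (E' j))) = real_of_int (s j) * ln (real m)" if "K \<le> j" for j
          proof (cases "s j = 1")
            case True
            then have "E' j = D" unfolding E'_def dl'_def using that by auto
            then show ?thesis using True unfolding m_def by simp
          next
            case False
            then have s0: "s j = 0" using s01[of j] by auto
            have "E' j = {d1}" unfolding E'_def dl'_def using that False d12(3) by auto
            then show ?thesis using s0 by simp
          qed
          have lnprod: "ln (real (card (PiE {..<k} E'))) = (\<Sum>j<k. ln (real (card (E' j))))" for k
          proof -
            have fE: "finite (E' j)" for j using E'D finD finite_subset by blast
            have "card (PiE {..<k} E') = (\<Prod>j<k. card (E' j))" by (simp add: card_PiE)
            then have "real (card (PiE {..<k} E')) = (\<Prod>j<k. real (card (E' j)))" by simp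
            moreover have "real (card (E' j)) \<noteq> 0" for j using fE E'ne by simp
            ultimately show ?thesis by (simp add: ln_prod)
          qed
          have limI: "(\<lambda>k. ln (real (card (PiE {..<k} E'))) / real k) \<longlonglongrightarrow> p * ln (real m)"
            unfolding lnprod by (rule seq_limit_construct[OF p0, of K]) (use cardE s_def in simp)
          have dimI: "box_dim_exists (moran E') \<and> box_dim (moran E') = p * ln (real m) / ln (1/c)"
            by (rule moran_box[OF E'D E'ne u0 ubnd limI])
          have "p * ln (real m) / ln (1/c) = lam" using pm lc by simp
          moreover have "\<alpha>' \<in> Fset A D" using a'T Fchar by simp
          ultimately have "\<alpha>' \<in> Phi_level A D lam" unfolding Phi_level_def using inter dimI by simp
          moreover have "dist \<alpha>' \<alpha> < \<epsilon>"
          proof -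
            have b1: "\<forall>j. norm (dl' j) \<le> 2 * M" "\<forall>j. norm (dl j) \<le> 2 * M" using dl'D dl(1) diff_bound' by auto
            define f where "f j = dl' j - dl j" for j
            have fb: "\<forall>j. norm (f j) \<le> 4 * M"
            proof
              fix j
              have "norm (f j) \<le> norm (dl' j) + norm (dl j)" unfolding f_def by (rule norm_triangle_ineq4)
              then show "norm (f j) \<le> 4 * M" using b1[THEN spec, of j] by linarith
            qed
            have "\<alpha>' - \<alpha> = digit_map A f" unfolding \<alpha>'_def dl(2) f_def by (rule dm_diff[OF b1, symmetric])
            also have "\<dots> = (\<Sum>j<K. bp (Suc j) (f j)) + bp K (digit_map A (\<lambda>j. f (j + K)))"
              by (rule dm_split[OF fb])
            also have "(\<Sum>j<K. bp (Suc j) (f j)) = 0" unfolding f_def dl'_def by (simp add: bp_0)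
            finally have "norm (\<alpha>' - \<alpha>) = c ^ K * norm (digit_map A (\<lambda>j. f (j + K)))" by (simp add: bp_norm)
            also have "\<dots> \<le> c ^ K * (4 * M / (1 - c))"
              by (rule mult_left_mono[OF dm_norm]) (use fb c in auto)
            also have "\<dots> < \<epsilon>"
            proof -
              have "c ^ K * (4 * M + 1) < \<epsilon> * (1 - c)" using K M0 by (simp add: pos_less_divide_eq)
              moreover have "c ^ K * (4 * M) \<le> c ^ K * (4 * M + 1)" using c by simp
              ultimately have "c ^ K * (4 * M) < \<epsilon> * (1 - c)" by linarith
              then show ?thesis using c by (simp add: pos_divide_less_eq)
            qed
            finally show ?thesis by (simp add: dist_norm)
          qed
          ultimately show "\<exists>y\<in>Phi_level A D lam. dist y \<alpha> < \<epsilon>" by blast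
        qed
      qed
    qed
  qed
qed


end
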